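(* Let $D$ be a rectangle whose upper and lower sides $P^1,P^2$ have length $a$ and whose left and right sides $Q^1,Q^2$ have length $b$. Then for every $k\in\mathbb{Z}_+$, $$\lambda_k^{Q^1Q^2}(D)\ \ge\ \frac{\pi^2}{b^2}\,M\!\left(\frac{b}{a}\,k\right),$$ where $M:[0,\infty)\to[0,\infty)$ is the inverse function of the strictly increasing continuous bijection $y\mapsto F(y)=\sum_{j=0}^{\infty}(y-j^2)_+^{1/2}$, $y\ge 0$, and $z_+=\max\{z,0\}$.
   Context: $\lambda_k^{Q^1Q^2}(D)$ denotes the $k$-th eigenvalue (with multiplicity, nondecreasing order) of $-\Delta$ on $D$ with Dirichlet condition on the left and right sides $Q^1,Q^2$ and Neumann condition on the upper and lower sides $P^1,P^2$. Its eigenvalues are $\pi^2(i^2/a^2+j^2/b^2)$, $i=1,2,\dots$, $j=0,1,2,\dots$. *)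

theory Defs
  imports Complex_Main
begin

text \<open>Mixed Dirichlet (left/right sides Q1,Q2, length b) / Neumann (upper/lower sides P1,P2,
  length a) eigenvalues of the rectangle: the multiset
  pi^2 (i^2/a^2 + j^2/b^2), i = 1,2,..., j = 0,1,2,...\<close>

definition rect_eig :: "real \<Rightarrow> real \<Rightarrow> nat \<times> nat \<Rightarrow> real" where
  "rect_eig a b ij = pi\<^sup>2 * (real (fst ij)^2 / a^2 + real (snd ij)^2 / b^2)"

definition rect_count :: "real \<Rightarrow> real \<Rightarrow> real \<Rightarrow> nat" where
  "rect_count a b t = card {ij :: nat \<times> nat. 1 \<le> fst ij \<and> rect_eig a b ij \<le> t}"

text \<open>k-th eigenvalue (k \<ge> 1), counted with multiplicity, nondecreasing order.\<close>
definition lambdaQQ :: "real \<Rightarrow> real \<Rightarrow> nat \<Rightarrow> real" where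
  "lambdaQQ a b k = Inf {t. k \<le> rect_count a b t}"

definition posp :: "real \<Rightarrow> real" where
  "posp z = max z 0"

definition Ffun :: "real \<Rightarrow> real" where
  "Ffun y = (\<Sum>j. sqrt (posp (y - real j ^ 2)))"

definition Mfun :: "real \<Rightarrow> real" where
  "Mfun z = (THE y. 0 \<le> y \<and> Ffun y = z)"

end

theory Submission
  imports Defs
begin

definition gterm :: "nat \<Rightarrow> real \<Rightarrow> real" where
  "gterm j y = sqrt (posp (y - real j ^ 2))"

lemma gterm_nonneg: "0 \<le> gterm j y"
  unfolding gterm_def posp_def by simp

lemma gterm_mono: "y \<le> y' \<Longrightarrow> gterm j y \<le> gterm j y'"
  unfolding gterm_def posp_def by simp

lemma F_fin:
  assumes "y \<le> real N ^ 2"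
  shows "Ffun y = (\<Sum>j<N. gterm j y)"
proof -
  have "(\<lambda>j. sqrt (posp (y - real j ^ 2))) n = 0" if "n \<notin> {..<N}" for n
  proof -
    from that have "N \<le> n" by simp
    hence "real N ^ 2 \<le> real n ^ 2" by (intro power_mono) auto
    hence "y \<le> real n ^ 2" using assms by linarith
    thus ?thesis by (simp add: posp_def)
  qed
  hence "Ffun y = (\<Sum>j<N. sqrt (posp (y - real j ^ 2)))"
    unfolding Ffun_def by (intro suminf_finite) auto
  thus ?thesis by (simp add: gterm_def)
qed

lemma exN: "\<exists>N::nat. y < real N ^ 2"
proof -
  obtain n :: nat where n: "y < real n" using reals_Archimedean2 by blast
  show ?thesis
  proof (cases "n = 0")
    case True thus ?thesis using n by (intro exI[of _ 0]) auto
  next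
    case False
    hence "real n \<le> real n ^ 2" by (simp add: power2_eq_square)
    thus ?thesis using n by (intro exI[of _ n]) linarith
  qed
qed

lemma F_strict:
  assumes "y < y'" "0 < y'"
  shows "Ffun y < Ffun y'"
proof -
  obtain N where N: "y' < real N ^ 2" using exN by blast
  have "N \<noteq> 0" using N assms by (cases N) auto
  have e1: "Ffun y = (\<Sum>j<N. gterm j y)" using N assms by (intro F_fin) auto
  have e2: "Ffun y' = (\<Sum>j<N. gterm j y')" using N assms by (intro F_fin) auto
  have "gterm 0 y < gterm 0 y'" unfolding gterm_def posp_def using assms by simp
  hence "(\<Sum>j<N. gterm j y) < (\<Sum>j<N. gterm j y')"
    using \<open>N \<noteq> 0\<close> assms
    by (intro sum_strict_mono_ex1) (auto intro: gterm_mono)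
  thus ?thesis using e1 e2 by simp
qed

lemma F_zero: "Ffun 0 = 0"
  using F_fin[of 0 0] by simp

lemma F_cont: "continuous_on {0..real N ^ 2} Ffun"
proof -
  have "continuous_on {0..real N ^ 2} (\<lambda>y. \<Sum>j<N. gterm j y)"
    unfolding gterm_def posp_def by (intro continuous_intros continuous_on_max)
  moreover have "continuous_on {0..real N ^ 2} Ffun \<longleftrightarrow>
      continuous_on {0..real N ^ 2} (\<lambda>y. \<Sum>j<N. gterm j y)"
    by (rule continuous_on_cong) (auto simp: F_fin)
  ultimately show ?thesis by simp
qed

lemma F_big: "real N \<le> Ffun (real N ^ 2)"
proof -
  have "Ffun (real N ^ 2) = (\<Sum>j<Suc N. gterm j (real N ^ 2))"
    by (intro F_fin) (simp add: power_mono)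
  also have "\<dots> \<ge> gterm 0 (real N ^ 2)"
    by (rule member_le_sum) (auto simp: gterm_nonneg)
  finally show ?thesis by (simp add: gterm_def posp_def)
qed

lemma M_char:
  assumes "0 < z"
  shows "0 \<le> Mfun z \<and> Ffun (Mfun z) = z"
proof -
  obtain N :: nat where N: "z \<le> real N" using real_arch_simple by blast
  have "z \<le> Ffun (real N ^ 2)" using N F_big[of N] by linarith
  then obtain y0 where y0: "0 \<le> y0" "Ffun y0 = z"
    using IVT'[of Ffun 0 z "real N ^ 2"] F_cont[of N] F_zero assms by auto
  have uniq: "y = y0" if "0 \<le> y" "Ffun y = z" for y
  proof (rule ccontr)
    assume "y \<noteq> y0"
    hence "y < y0 \<or> y0 < y" by linarith
    thus False
    proof
      assume h: "y < y0"
      hence "0 < y0" using that(1) by linarith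
      hence "Ffun y < Ffun y0" using h by (rule F_strict[rotated])
      thus False using that(2) y0(2) by linarith
    next
      assume h: "y0 < y"
      hence "0 < y" using y0(1) by linarith
      hence "Ffun y0 < Ffun y" using h by (rule F_strict[rotated])
      thus False using that(2) y0(2) by linarith
    qed
  qed
  have "Mfun z = y0" unfolding Mfun_def
  proof (rule the_equality)
    show "0 \<le> y0 \<and> Ffun y0 = z" using y0 by simp
  next
    fix y assume "0 \<le> y \<and> Ffun y = z"
    thus "y = y0" using uniq by blast
  qed
  thus ?thesis using y0 by simp
qed

lemma count_bound:
  fixes t :: real
  assumes a: "0 < a" and b: "0 < b"
  defines "S \<equiv> {ij :: nat \<times> nat. 1 \<le> fst ij \<and> rect_eig a b ij \<le> t}"
  shows "finite S \<and> real (card S) \<le> a / b * Ffun (t * b^2 / pi^2)"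
proof -
  define y where "y = t * b^2 / pi^2"
  obtain N where N: "y < real N ^ 2" using exN by blast
  define c where "c j = a / b * gterm j y" for j
  define T where "T = (\<Union>j\<in>{..<N}. {1..nat \<lfloor>c j\<rfloor>} \<times> {j})"
  have sub: "S \<subseteq> T"
  proof
    fix ij assume "ij \<in> S"
    then obtain i j where ij: "ij = (i, j)" "1 \<le> i"
      and le: "pi^2 * (real i ^ 2 / a^2 + real j ^ 2 / b^2) \<le> t"
      unfolding S_def rect_eig_def by (cases ij) auto
    have pi2: "0 < pi^2" by simp
    have ty: "t / pi^2 = y / b^2" unfolding y_def using b by (simp add: field_simps)
    have "real i ^ 2 / a^2 + real j ^ 2 / b^2 \<le> t / pi^2"
      using le pi2 by (metis mult.commute pos_le_divide_eq)
    hence le2: "real i ^ 2 / a^2 + real j ^ 2 / b^2 \<le> y / b^2" using ty by simp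
    have "real i ^ 2 / a^2 \<le> (y - real j ^ 2) / b^2"
      using le2 by (simp add: diff_divide_distrib)
    hence ia: "real i ^ 2 \<le> (a / b)^2 * (y - real j ^ 2)"
      using a b by (simp add: field_simps power_divide)
    have nn: "0 \<le> y - real j ^ 2"
    proof -
      have "0 \<le> real i ^ 2" by simp
      hence "0 \<le> (a/b)^2 * (y - real j ^ 2)" using ia by linarith
      thus ?thesis using a b by (simp add: zero_le_mult_iff)
    qed
    have "real j ^ 2 < real N ^ 2" using nn N by linarith
    hence "real j < real N" by (rule power_less_imp_less_base) simp
    hence "j < N" by simp
    have "real i = sqrt (real i ^ 2)" by simp
    also have "\<dots> \<le> sqrt ((a / b)^2 * (y - real j ^ 2))" using ia by (rule real_sqrt_le_mono)
    also have "\<dots> = a / b * sqrt (y - real j ^ 2)" using a b by (simp add: real_sqrt_mult)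
    also have "\<dots> = c j" using nn unfolding c_def gterm_def posp_def by simp
    finally have "i \<le> nat \<lfloor>c j\<rfloor>" by (rule le_nat_floor)
    thus "ij \<in> T" unfolding T_def using ij \<open>j < N\<close> by auto
  qed
  have finT: "finite T" unfolding T_def by auto
  have "card T \<le> (\<Sum>j<N. card ({1..nat \<lfloor>c j\<rfloor>} \<times> {j}))"
    unfolding T_def by (rule card_UN_le) simp
  also have "\<dots> = (\<Sum>j<N. nat \<lfloor>c j\<rfloor>)" by (simp add: card_cartesian_product)
  finally have "real (card T) \<le> real (\<Sum>j<N. nat \<lfloor>c j\<rfloor>)" by linarith
  also have "\<dots> = (\<Sum>j<N. real (nat \<lfloor>c j\<rfloor>))" by simp
  also have "\<dots> \<le> (\<Sum>j<N. c j)"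
  proof (rule sum_mono)
    fix j
    have "0 \<le> c j" unfolding c_def using a b gterm_nonneg by simp
    thus "real (nat \<lfloor>c j\<rfloor>) \<le> c j" by (simp add: of_nat_int_floor)
  qed
  also have "\<dots> = a / b * (\<Sum>j<N. gterm j y)" unfolding c_def by (simp add: sum_distrib_left)
  also have "\<dots> = a / b * Ffun y" using F_fin[of y N] N by simp
  finally have "real (card T) \<le> a / b * Ffun y" .
  moreover have "card S \<le> card T" using finT sub by (rule card_mono)
  ultimately have "real (card S) \<le> a / b * Ffun y" by linarith
  moreover have "finite S" using sub finT by (rule finite_subset)
  ultimately show ?thesis by (simp only: y_def)
qed

theorem lemma3p2:
  fixes a b :: real and k :: nat
  assumes "0 < a" and "0 < b" and "1 \<le> k"
  shows "lambdaQQ a b k \<ge> pi\<^sup>2 / b\<^sup>2 * Mfun (b / a * real k)"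
proof -
  define z where "z = b / a * real k"
  have zpos: "0 < z" unfolding z_def using assms by simp
  obtain y0 where y0: "y0 = Mfun z" "0 \<le> y0" "Ffun y0 = z" using M_char[OF zpos] by auto
  have y0pos: "0 < y0" using y0 zpos F_zero by (cases "y0 = 0") auto
  define X where "X = {t. k \<le> rect_count a b t}"
  have ne: "X \<noteq> {}"
  proof -
    define t0 where "t0 = pi^2 * real k ^ 2 / a^2"
    define S where "S = {ij :: nat \<times> nat. 1 \<le> fst ij \<and> rect_eig a b ij \<le> t0}"
    have fin: "finite S" using count_bound[OF assms(1,2), of t0] unfolding S_def by blast
    have "(\<lambda>i. (i, 0::nat)) ` {1..k} \<subseteq> S"
    proof
      fix x assume "x \<in> (\<lambda>i. (i, 0::nat)) ` {1..k}"
      then obtain i where i: "x = (i, 0)" "1 \<le> i" "i \<le> k" by auto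
      have "real i ^ 2 \<le> real k ^ 2" using i by (simp add: power_mono)
      hence "pi^2 * (real i ^ 2 / a^2) \<le> t0" unfolding t0_def using assms
        by (simp add: divide_right_mono)
      thus "x \<in> S" unfolding S_def rect_eig_def using i by simp
    qed
    hence "card ((\<lambda>i. (i, 0::nat)) ` {1..k}) \<le> card S" using fin by (rule card_mono[rotated])
    moreover have "card ((\<lambda>i. (i, 0::nat)) ` {1..k}) = k"
      by (subst card_image) (auto simp: inj_on_def)
    ultimately have "t0 \<in> X" unfolding X_def rect_count_def S_def by simp
    thus ?thesis by blast
  qed
  have lb: "pi\<^sup>2 / b\<^sup>2 * y0 \<le> t" if "t \<in> X" for t
  proof -
    define y where "y = t * b^2 / pi^2"
    have "real k \<le> real (rect_count a b t)" using that unfolding X_def by simp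
    also have "\<dots> \<le> a / b * Ffun y"
      using count_bound[OF assms(1,2), of t] unfolding rect_count_def y_def by blast
    finally have "z \<le> Ffun y" unfolding z_def using assms by (simp add: field_simps)
    have "y0 \<le> y"
    proof (rule ccontr)
      assume "\<not> y0 \<le> y"
      hence "Ffun y < Ffun y0" using F_strict y0pos by simp
      thus False using \<open>z \<le> Ffun y\<close> y0 by simp
    qed
    hence "pi\<^sup>2 / b\<^sup>2 * y0 \<le> pi\<^sup>2 / b\<^sup>2 * y" by (intro mult_left_mono) auto
    also have "\<dots> = t" unfolding y_def using assms by simp
    finally show ?thesis .
  qed
  have "pi\<^sup>2 / b\<^sup>2 * y0 \<le> Inf X" using ne lb by (rule cInf_greatest)
  moreover have "lambdaQQ a b k = Inf X" unfolding lambdaQQ_def X_def by (rule refl)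
  moreover have "Mfun (b / a * real k) = y0" using y0(1) unfolding z_def by (rule sym)
  ultimately show ?thesis by simp
qed

end
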